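(* Let $k\ge2$, let $f_1,\ldots,f_k$ be primitive forms of square-free levels with weights $\kappa_1,\ldots,\kappa_k$, and let $\nu_1,\ldots,\nu_k$ be distinct positive integers with $a_{f_i}(\nu_i)\neq0$ for all $i$. Put $K=\max\{\nu_1,\ldots,\nu_k\}$. Then there exists a real number $c_0>0$, depending on $K$ and $f_1,\ldots,f_k$, such that for every positive integer $m$ with $m\equiv0\pmod{(2K)!}$ and every $i=1,\ldots,k$, $$c_0|\lambda_{f_i}(m_i)|\le|\lambda_{f_i}(m+\nu_i)|\le c_0^{-1}|\lambda_{f_i}(m_i)|$$ and $$c_0|\lambda_{f_i}(m_i)|\le\frac{|a_{f_i}(m+\nu_i)|}{m^{(\kappa_i-1)/2}}\le c_0^{-1}|\lambda_{f_i}(m_i)|,$$ where $m_i$ is defined by $m+\nu_i=\nu_im_i$.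
   Context: A primitive form of weight $\kappa$ and level $N$ is a holomorphic cusp form of weight $\kappa$ for $\Gamma_0(N)$ with trivial character which is a normalized Hecke eigenform for all Hecke operators and all Atkin–Lehner involutions; $f(z)=\sum_{n\ge1}a_f(n)q^n$ is its Fourier expansion, and $\lambda_f(n)=a_f(n)/n^{(\kappa-1)/2}$. *)

theory Defs
  imports "HOL-Analysis.Analysis" "HOL-Computational_Algebra.Squarefree"
begin

definition upper_half :: "complex set" where
  "upper_half = {z. Im z > 0}"

definition gamma0_invariant :: "nat \<Rightarrow> nat \<Rightarrow> (complex \<Rightarrow> complex) \<Rightarrow> bool" where
  "gamma0_invariant \<kappa> N f \<longleftrightarrow>
     (\<forall>a b c d :: int. a * d - b * c = 1 \<and> int N dvd c \<longrightarrow>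
        (\<forall>z\<in>upper_half. f ((of_int a * z + of_int b) / (of_int c * z + of_int d))
                         = (of_int c * z + of_int d) ^ \<kappa> * f z))"

definition vanishes_at_cusps :: "nat \<Rightarrow> (complex \<Rightarrow> complex) \<Rightarrow> bool" where
  "vanishes_at_cusps \<kappa> f \<longleftrightarrow>
     (\<forall>a b c d :: int. a * d - b * c = 1 \<longrightarrow>
        (\<forall>\<epsilon>>0. \<exists>Y. \<forall>z. Im z > Y \<longrightarrow>
           norm (f ((of_int a * z + of_int b) / (of_int c * z + of_int d))
                 / (of_int c * z + of_int d) ^ \<kappa>) < \<epsilon>))"

definition cusp_form :: "nat \<Rightarrow> nat \<Rightarrow> (complex \<Rightarrow> complex) \<Rightarrow> bool" where
  "cusp_form \<kappa> N f \<longleftrightarrow> N > 0 \<and> f holomorphic_on upper_half \<and>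
     gamma0_invariant \<kappa> N f \<and> vanishes_at_cusps \<kappa> f"

definition has_q_expansion :: "(complex \<Rightarrow> complex) \<Rightarrow> (nat \<Rightarrow> complex) \<Rightarrow> bool" where
  "has_q_expansion f a \<longleftrightarrow>
     (\<forall>z\<in>upper_half. (\<lambda>n. a n * exp (2 * of_real pi * \<i> * of_nat n * z)) sums f z)"

definition fourier_coeff :: "(complex \<Rightarrow> complex) \<Rightarrow> nat \<Rightarrow> complex" where
  "fourier_coeff f = (THE a. has_q_expansion f a)"

definition hecke_op :: "nat \<Rightarrow> nat \<Rightarrow> nat \<Rightarrow> (complex \<Rightarrow> complex) \<Rightarrow> complex \<Rightarrow> complex" where
  "hecke_op \<kappa> N n f z =
     of_real (real n powr (real \<kappa> - 1)) *
     (\<Sum>d\<in>{d. d dvd n \<and> coprime (n div d) N}.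
        \<Sum>b<d. f ((of_nat (n div d) * z + of_nat b) / of_nat d) / of_nat d ^ \<kappa>)"

definition hecke_eigenform :: "nat \<Rightarrow> nat \<Rightarrow> (complex \<Rightarrow> complex) \<Rightarrow> bool" where
  "hecke_eigenform \<kappa> N f \<longleftrightarrow>
     (\<forall>n>0. \<exists>\<mu>::complex. \<forall>z\<in>upper_half. hecke_op \<kappa> N n f z = \<mu> * f z)"

text \<open>Atkin--Lehner involutions W_Q (Q || N), given by integer matrices
  [[Qx, y], [Nz, Qw]] of determinant Q, acting by
  (f|W)(tau) = Q^(kappa/2) (N z tau + Q w)^(-kappa) f((Qx tau + y)/(N z tau + Q w)).\<close>
definition atkin_lehner_eigen :: "nat \<Rightarrow> nat \<Rightarrow> (complex \<Rightarrow> complex) \<Rightarrow> bool" where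
  "atkin_lehner_eigen \<kappa> N f \<longleftrightarrow>
     (\<forall>Q::nat. Q dvd N \<and> coprime Q (N div Q) \<longrightarrow>
       (\<forall>x y z w :: int. int Q * x * (int Q * w) - y * (int N * z) = int Q \<longrightarrow>
         (\<exists>\<epsilon>::complex. \<forall>\<tau>\<in>upper_half.
            of_real (real Q powr (real \<kappa> / 2)) *
            f ((of_int (int Q * x) * \<tau> + of_int y) / (of_int (int N * z) * \<tau> + of_int (int Q * w)))
            / (of_int (int N * z) * \<tau> + of_int (int Q * w)) ^ \<kappa>
            = \<epsilon> * f \<tau>)))"

definition primitive_form :: "nat \<Rightarrow> nat \<Rightarrow> (complex \<Rightarrow> complex) \<Rightarrow> bool" where
  "primitive_form \<kappa> N f \<longleftrightarrow> cusp_form \<kappa> N f \<and> hecke_eigenform \<kappa> N f \<and>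
     atkin_lehner_eigen \<kappa> N f \<and> fourier_coeff f 1 = 1"

definition lambda_f :: "(complex \<Rightarrow> complex) \<Rightarrow> nat \<Rightarrow> nat \<Rightarrow> complex" where
  "lambda_f f \<kappa> n = fourier_coeff f n / of_real (real n powr ((real \<kappa> - 1) / 2))"

end

theory Submission
  imports Defs "HOL-Complex_Analysis.Complex_Analysis"
begin


lemma cusp_periodic:
  assumes "cusp_form \<kappa> N f" "z \<in> upper_half"
  shows "f (z + of_int n) = f z"
proof -
  have "gamma0_invariant \<kappa> N f" using assms(1) by (simp add: cusp_form_def)
  then have "f ((of_int 1 * z + of_int n) / (of_int 0 * z + of_int 1)) = (of_int 0 * z + of_int 1) ^ \<kappa> * f z"
    unfolding gamma0_invariant_def using assms(2) by (metis (no_types) dvd_0_right mult_1 mult_zero_right diff_zero)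
  then show ?thesis by simp
qed

lemma cusp_exp_same:
  assumes "cusp_form \<kappa> N f" "z \<in> upper_half" "z' \<in> upper_half"
    and "exp (2 * of_real pi * \<i> * z) = exp (2 * of_real pi * \<i> * z')"
  shows "f z = f z'"
proof -
  obtain n :: int where n: "2 * of_real pi * \<i> * z = 2 * of_real pi * \<i> * z' + (of_int (2 * n) * pi) * \<i>"
    using assms(4) exp_eq by blast
  have "z = z' + of_int n"
  proof -
    have "2 * of_real pi * \<i> * z = 2 * of_real pi * \<i> * (z' + of_int n)" using n by (simp add: algebra_simps)
    then show ?thesis by simp
  qed
  then show ?thesis using cusp_periodic[OF assms(1) assms(3)] by simp
qed

lemma upper_Ln:
  fixes w :: complex
  assumes "w \<noteq> 0" "norm w < 1"
  shows "Ln w / (2 * of_real pi * \<i>) \<in> upper_half"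
    and "exp (2 * of_real pi * \<i> * (Ln w / (2 * of_real pi * \<i>))) = w"
proof -
  have "Ln w / (2 * of_real pi * \<i>) = - \<i> * Ln w / (2 * of_real pi)" by (simp add: field_simps)
  then have "Im (Ln w / (2 * of_real pi * \<i>)) = - Re (Ln w) / (2 * pi)"
    by (simp add: Im_divide_of_real)
  also have "\<dots> = - ln (norm w) / (2*pi)" using assms by simp
  also have "\<dots> > 0" using assms by (simp add: divide_neg_pos ln_less_zero_iff)  
  finally show "Ln w / (2 * of_real pi * \<i>) \<in> upper_half" by (simp add: upper_half_def)
  show "exp (2 * of_real pi * \<i> * (Ln w / (2 * of_real pi * \<i>))) = w" using assms by simp
qed

lemma exp_upper:
  fixes u w :: complex
  assumes "exp u = w" "w \<noteq> 0" "norm w < 1"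
  shows "u / (2 * of_real pi * \<i>) \<in> upper_half"
proof -
  have "u / (2 * of_real pi * \<i>) = - \<i> * u / (2 * of_real pi)" by (simp add: field_simps)
  then have "Im (u / (2 * of_real pi * \<i>)) = - Re u / (2 * pi)"
    by (simp add: Im_divide_of_real)
  also have "Re u = ln (norm w)" using assms(1) by auto
  also have "- ln (norm w) / (2*pi) > 0" using assms by (simp add: divide_neg_pos)
  finally show ?thesis by (simp add: upper_half_def)
qed

definition qf :: "(complex \<Rightarrow> complex) \<Rightarrow> complex \<Rightarrow> complex" where
  "qf f w = (if w = 0 then 0 else f (Ln w / (2 * of_real pi * \<i>)))"

lemma qf_exp:
  assumes "cusp_form \<kappa> N f" "z \<in> upper_half"
  shows "qf f (exp (2 * of_real pi * \<i> * z)) = f z"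
proof -
  let ?w = "exp (2 * of_real pi * \<i> * z)"
  have nw: "norm ?w < 1" using assms(2) by (simp add: upper_half_def)
  have w0: "?w \<noteq> 0" by simp
  have "f (Ln ?w / (2 * of_real pi * \<i>)) = f z"
    by (rule cusp_exp_same[OF assms(1) upper_Ln(1)[OF w0 nw] assms(2)]) (simp add: upper_Ln(2)[OF w0 nw])
  then show ?thesis by (simp add: qf_def)
qed

lemma qf_diff:
  assumes "cusp_form \<kappa> N f" "w0 \<noteq> 0" "norm w0 < 1"
  shows "qf f field_differentiable at w0"
proof -
  define h where "h w = f ((Ln (w / w0) + Ln w0) / (2 * of_real pi * \<i>))" for w
  define d where "d = min (norm w0) (1 - norm w0)"
  have d: "d > 0" using assms by (simp add: d_def)
  have holf: "f holomorphic_on upper_half" using assms(1) by (simp add: cusp_form_def)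
  have op: "open upper_half" unfolding upper_half_def by (simp add: open_halfspace_Im_gt)
  have eq: "h w = qf f w" if "dist w w0 < d" for w
  proof -
    have "norm (w - w0) < norm w0" using that by (simp add: d_def dist_norm)
    then have wn: "w \<noteq> 0" by auto
    have "norm w \<le> norm w0 + norm (w - w0)" by (metis add.commute diff_add_cancel norm_triangle_ineq)
    then have wl: "norm w < 1" using that by (simp add: d_def dist_norm)
    have ex: "exp (Ln (w / w0) + Ln w0) = w" using wn assms(2) by (simp add: exp_add)
    have e1: "exp (2 * of_real pi * \<i> * ((Ln (w / w0) + Ln w0) / (2 * of_real pi * \<i>))) = w"
      using ex by simp
    have e2: "exp (2 * of_real pi * \<i> * (Ln w / (2 * of_real pi * \<i>))) = w"
      by (rule upper_Ln(2)[OF wn wl])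
    have "f ((Ln (w / w0) + Ln w0) / (2 * of_real pi * \<i>)) = f (Ln w / (2 * of_real pi * \<i>))"
      by (rule cusp_exp_same[OF assms(1) exp_upper[OF ex wn wl] upper_Ln(1)[OF wn wl]]) (simp only: e1 e2)
    then show ?thesis using wn by (simp add: h_def qf_def)
  qed
  have "(\<lambda>w. (Ln (w / w0) + Ln w0) / (2 * of_real pi * \<i>)) field_differentiable at w0"
  proof -
    have "((\<lambda>w. (Ln (w / w0) + Ln w0) / (2 * of_real pi * \<i>)) has_field_derivative
       (inverse (w0/w0) * (1/w0) + 0) / (2 * of_real pi * \<i>)) (at w0)"
      using assms(2) by (auto intro!: derivative_eq_intros)
    then show ?thesis unfolding field_differentiable_def by blast
  qed
  moreover have "f field_differentiable at ((Ln (w0 / w0) + Ln w0) / (2 * of_real pi * \<i>))"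
  proof -
    have "(Ln (w0 / w0) + Ln w0) / (2 * of_real pi * \<i>) \<in> upper_half"
      using upper_Ln(1)[OF assms(2,3)] assms(2) by simp
    then show ?thesis using holf op holomorphic_on_imp_differentiable_at by blast
  qed
  ultimately have "(f \<circ> (\<lambda>w. (Ln (w / w0) + Ln w0) / (2 * of_real pi * \<i>))) field_differentiable at w0"
    by (rule field_differentiable_compose)
  then have "h field_differentiable at w0" unfolding h_def o_def .
  then show ?thesis
    using field_differentiable_transform_within[OF d, of w0 UNIV h "qf f"] eq by (simp add: dist_commute)
qed

lemma qf_tendsto0:
  assumes "cusp_form \<kappa> N f"
  shows "(qf f \<longlongrightarrow> qf f 0) (at 0 within ball 0 1)"
proof -
  have van: "vanishes_at_cusps \<kappa> f" using assms by (simp add: cusp_form_def)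
  have V: "\<exists>Y. \<forall>z. Im z > Y \<longrightarrow> norm (f z) < e" if "e > 0" for e
  proof -
    from van that obtain Y where Y: "\<forall>z. Im z > Y \<longrightarrow>
        norm (f ((of_int 1 * z + of_int 0) / (of_int 0 * z + of_int 1)) / (of_int 0 * z + of_int 1) ^ \<kappa>) < e"
      unfolding vanishes_at_cusps_def by (metis (no_types) diff_zero mult_1 mult_zero_right)
    then show ?thesis by auto
  qed
  show ?thesis
    unfolding Lim_within
  proof (intro allI impI)
    fix e :: real assume e: "e > 0"
    obtain Y where Y: "\<forall>z. Im z > Y \<longrightarrow> norm (f z) < e" using V[OF e] by blast
    define d where "d = exp (- 2 * pi * Y)"
    have "d > 0" by (simp add: d_def)
    moreover have "dist (qf f w) (qf f 0) < e" if "w \<in> ball 0 1" "0 < dist w 0" "dist w 0 < d" for w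
    proof -
      have wn: "w \<noteq> 0" and wl: "norm w < 1" and wd: "norm w < d" using that by auto
      have "Ln w / (2 * of_real pi * \<i>) = - \<i> * Ln w / (2 * of_real pi)" by (simp add: field_simps)
      then have "Im (Ln w / (2 * of_real pi * \<i>)) = - Re (Ln w) / (2 * pi)"
        by (simp add: Im_divide_of_real)
      also have "\<dots> = - ln (norm w) / (2*pi)" using wn by simp
      also have "\<dots> > Y"
      proof -
        have "ln (norm w) < ln d" using wd wn by (simp add: \<open>d > 0\<close>)
        then have "ln (norm w) < - 2 * pi * Y" by (simp add: d_def)
        then show ?thesis by (simp add: field_simps)
      qed
      finally have "norm (f (Ln w / (2 * of_real pi * \<i>))) < e" using Y by blast
      then show ?thesis using wn by (simp add: qf_def dist_norm)
    qed
    ultimately show "\<exists>d>0. \<forall>x\<in>ball 0 1. 0 < dist x 0 \<and> dist x 0 < d \<longrightarrow> dist (qf f x) (qf f 0) < e"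
      by blast
  qed
qed

lemma qf_holo:
  assumes "cusp_form \<kappa> N f"
  shows "qf f holomorphic_on ball 0 1"
proof (rule no_isolated_singularity'[where K="{0}"])
  show "(qf f \<longlongrightarrow> qf f z) (at z within ball 0 1)" if "z \<in> {0}" for z
    using that qf_tendsto0[OF assms] by simp
  show "qf f holomorphic_on ball 0 1 - {0}"
    unfolding holomorphic_on_def
    using qf_diff[OF assms] field_differentiable_at_within by fastforce
qed auto

lemma cusp_has_q:
  assumes "cusp_form \<kappa> N f"
  shows "has_q_expansion f (\<lambda>n. (deriv ^^ n) (qf f) 0 / fact n)"
  unfolding has_q_expansion_def
proof
  fix z assume z: "z \<in> upper_half"
  let ?w = "exp (2 * of_real pi * \<i> * z)"
  have nw: "?w \<in> ball 0 1" using z by (simp add: upper_half_def)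
  have "(\<lambda>n. (deriv ^^ n) (qf f) 0 / fact n * (?w - 0) ^ n) sums qf f ?w"
    by (rule holomorphic_power_series[OF qf_holo[OF assms] nw])
  moreover have "?w ^ n = exp (2 * of_real pi * \<i> * of_nat n * z)" for n
    by (metis exp_of_nat_mult mult.commute mult.left_commute)
  ultimately show "(\<lambda>n. (deriv ^^ n) (qf f) 0 / fact n * exp (2 * of_real pi * \<i> * of_nat n * z)) sums f z"
    using qf_exp[OF assms z] by simp
qed

lemma powser_zero_unique:
  fixes c :: "nat \<Rightarrow> complex"
  assumes H: "\<And>w. w \<noteq> 0 \<Longrightarrow> norm w < 1 \<Longrightarrow> (\<lambda>n. c n * w ^ n) sums 0"
  shows "c n = 0"
proof (induction n rule: less_induct)
  case (less n)
  have S: "(\<lambda>j. c (j + n) * w ^ j) sums 0" if "w \<noteq> 0" "norm w < 1" for w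
  proof -
    have "(\<lambda>i. c (i + n) * w ^ (i + n)) sums (0 - (\<Sum>i<n. c i * w ^ i))"
      using sums_split_initial_segment[OF H[OF that]] .
    then have "(\<lambda>i. c (i + n) * w ^ (i + n)) sums 0" using less by simp
    then have "(\<lambda>i. c (i + n) * w ^ (i + n) / w ^ n) sums (0 / w ^ n)" by (rule sums_divide)
    then show ?thesis using that by (simp add: power_add)
  qed
  have "((\<lambda>w::complex. 0::complex) \<longlongrightarrow> (\<lambda>j. c (j + n)) 0) (at 0)"
  proof (rule powser_limit_0_strong[where s=1])
    fix w :: complex assume "w \<noteq> 0" "norm w < 1"
    then show "(\<lambda>j. (\<lambda>j. c (j + n)) j * w ^ j) sums 0" using S by simp
  qed simp
  then show ?case using LIM_const_eq by (metis add_0 eq_commute)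
qed

lemma q_unique:
  assumes "has_q_expansion f a" "has_q_expansion f b"
  shows "a = b"
proof -
  have "(\<lambda>n. (a n - b n) * w ^ n) sums 0" if "w \<noteq> 0" "norm w < 1" for w
  proof -
    let ?z = "Ln w / (2 * of_real pi * \<i>)"
    have z: "?z \<in> upper_half" and ez: "exp (2 * of_real pi * \<i> * ?z) = w" using upper_Ln[OF that] by auto
    have e: "exp (2 * of_real pi * \<i> * of_nat n * ?z) = w ^ n" for n
      using ez by (metis exp_of_nat_mult mult.commute mult.left_commute)
    have "(\<lambda>n. a n * exp (2 * of_real pi * \<i> * of_nat n * ?z)) sums f ?z"
       "(\<lambda>n. b n * exp (2 * of_real pi * \<i> * of_nat n * ?z)) sums f ?z"
      using assms z unfolding has_q_expansion_def by auto
    then have "(\<lambda>n. a n * w ^ n) sums f ?z" "(\<lambda>n. b n * w ^ n) sums f ?z"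
      unfolding e .
    from sums_diff[OF this] show ?thesis by (simp add: algebra_simps)
  qed
  then have "a n - b n = 0" for n by (rule powser_zero_unique)
  then show ?thesis by auto
qed

lemma coeff_q:
  assumes "cusp_form \<kappa> N f"
  shows "has_q_expansion f (fourier_coeff f)"
  unfolding fourier_coeff_def
  by (rule theI[of "has_q_expansion f", OF cusp_has_q[OF assms]]) (rule q_unique[OF _ cusp_has_q[OF assms]])



lemma root_sum:
  assumes "d > 0"
  shows "(\<Sum>b<d. exp (2 * of_real pi * \<i> * of_nat j * of_nat b / of_nat d)) =
         (if d dvd j then of_nat d else (0::complex))"
proof -
  define x where "x = exp (2 * of_real pi * \<i> * of_nat j / of_nat d)"
  have xb: "exp (2 * of_real pi * \<i> * of_nat j * of_nat b / of_nat d) = x ^ b" for b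
    unfolding x_def by (metis exp_of_nat_mult mult.commute times_divide_eq_right)
  have xd: "x ^ d = 1"
  proof -
    have "x ^ d = exp (of_nat d * (2 * of_real pi * \<i> * of_nat j / of_nat d))"
      unfolding x_def by (metis exp_of_nat_mult)
    also have "\<dots> = exp (of_nat j * (2 * of_real pi * \<i>))" using assms by (simp add: field_simps)
    also have "\<dots> = 1" by (simp add: exp_of_nat_mult)
    finally show ?thesis .
  qed
  have x1: "x = 1 \<longleftrightarrow> d dvd j"
  proof
    assume "x = 1"
    then obtain k :: int where k: "Im (2 * of_real pi * \<i> * of_nat j / of_nat d) = of_int (2 * k) * pi"
      unfolding x_def exp_eq_1 by blast
    have "Im (2 * of_real pi * \<i> * of_nat j / of_nat d) = 2 * pi * j / d"
      by (simp add: Im_divide_of_nat)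
    then have "2 * pi * j / d = 2 * k * pi" using k by simp
    then have "real j = real d * k" using assms by (simp add: field_simps)
    then have "int j = int d * k" by (metis of_int_eq_iff of_int_mult of_int_of_nat_eq)
    then have "int d dvd int j" by simp
    then show "d dvd j" by simp
  next
    assume "d dvd j"
    then obtain m where m: "j = d * m" by blast
    have "x = exp (of_nat m * (2 * of_real pi * \<i>))" unfolding x_def m using assms by (simp add: field_simps)
    also have "\<dots> = 1" by (simp add: exp_of_nat_mult)
    finally show "x = 1" .
  qed
  show ?thesis
    unfolding xb using xd x1 by (simp add: sum_gp_strict)
qed

lemma hecke_inner:
  assumes cf: "cusp_form \<kappa> N f" and d: "d > 0" and e: "e > 0" and z: "z \<in> upper_half"
  shows "(\<lambda>t. of_nat d * fourier_coeff f (d * t) * exp (2 * of_real pi * \<i> * of_nat t * (of_nat e * z)))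
           sums (\<Sum>b<d. f ((of_nat e * z + of_nat b) / of_nat d))"
proof -
  define a where "a = fourier_coeff f"
  have hq: "has_q_expansion f a" unfolding a_def by (rule coeff_q[OF cf])
  define F where "F j = (if d dvd j then of_nat d * a j * exp (2 * of_real pi * \<i> * of_nat (j div d) * (of_nat e * z)) else 0)" for j
  have wb: "(of_nat e * z + of_nat b) / of_nat d \<in> upper_half" for b
    using z d e by (simp add: upper_half_def Im_divide_of_nat)
  have each: "(\<lambda>j. a j * exp (2 * of_real pi * \<i> * of_nat j * ((of_nat e * z + of_nat b) / of_nat d)))
      sums f ((of_nat e * z + of_nat b) / of_nat d)" for b
    using hq wb unfolding has_q_expansion_def by blast
  have key: "(\<Sum>b<d. a j * exp (2 * of_real pi * \<i> * of_nat j * ((of_nat e * z + of_nat b) / of_nat d))) = F j" for j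
  proof -
    have "exp (2 * of_real pi * \<i> * of_nat j * ((of_nat e * z + of_nat b) / of_nat d)) =
          exp (2 * of_real pi * \<i> * of_nat j * (of_nat e * z) / of_nat d) *
          exp (2 * of_real pi * \<i> * of_nat j * of_nat b / of_nat d)" for b
      by (simp add: exp_add[symmetric] add_divide_distrib distrib_left)
    then have "(\<Sum>b<d. a j * exp (2 * of_real pi * \<i> * of_nat j * ((of_nat e * z + of_nat b) / of_nat d)))
       = a j * exp (2 * of_real pi * \<i> * of_nat j * (of_nat e * z) / of_nat d) *
         (\<Sum>b<d. exp (2 * of_real pi * \<i> * of_nat j * of_nat b / of_nat d))"
      by (simp add: sum_distrib_left mult.assoc)
    also have "\<dots> = F j"
    proof (cases "d dvd j")
      case True
      then obtain m where m: "j = d * m" by blast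
      have "exp (2 * of_real pi * \<i> * of_nat j * (of_nat e * z) / of_nat d)
          = exp (2 * of_real pi * \<i> * of_nat m * (of_nat e * z))"
        using d unfolding m by (simp add: field_simps)
      moreover have "(\<Sum>b<d. exp (2 * of_real pi * \<i> * of_nat j * of_nat b / of_nat d)) = of_nat d"
        using root_sum[OF d, of j] True by simp
      moreover have "j div d = m" using m d by simp
      ultimately show ?thesis using True unfolding F_def by simp
    next
      case False
      then show ?thesis using d by (simp add: root_sum F_def)
    qed
    finally show ?thesis .
  qed
  have "(\<lambda>j. \<Sum>b<d. a j * exp (2 * of_real pi * \<i> * of_nat j * ((of_nat e * z + of_nat b) / of_nat d)))
         sums (\<Sum>b<d. f ((of_nat e * z + of_nat b) / of_nat d))"
    by (rule sums_sum) (rule each)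
  then have "F sums (\<Sum>b<d. f ((of_nat e * z + of_nat b) / of_nat d))" unfolding key .
  moreover have "strict_mono (\<lambda>t. d * t)" using d by (simp add: strict_mono_def)
  moreover have "F n = 0" if "n \<notin> range (\<lambda>t. d * t)" for n
    using that unfolding F_def by (auto elim!: dvdE)
  ultimately have "(\<lambda>t. F (d * t)) sums (\<Sum>b<d. f ((of_nat e * z + of_nat b) / of_nat d))"
    using sums_mono_reindex by blast
  moreover have "F (d * t) = of_nat d * fourier_coeff f (d * t) * exp (2 * of_real pi * \<i> * of_nat t * (of_nat e * z))" for t
    using d by (simp add: F_def a_def)
  ultimately show ?thesis by simp
qed

definition hcoef :: "nat \<Rightarrow> nat \<Rightarrow> nat \<Rightarrow> (complex \<Rightarrow> complex) \<Rightarrow> nat \<Rightarrow> complex" where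
  "hcoef \<kappa> N n f M = of_real (real n powr (real \<kappa> - 1)) *
     (\<Sum>d\<in>{d. d dvd n \<and> coprime (n div d) N}.
        (if (n div d) dvd M then of_nat d * fourier_coeff f (d * (M div (n div d))) / of_nat d ^ \<kappa> else 0))"

lemma hecke_q:
  assumes cf: "cusp_form \<kappa> N f" and n: "n > 0"
  shows "has_q_expansion (hecke_op \<kappa> N n f) (hcoef \<kappa> N n f)"
  unfolding has_q_expansion_def
proof
  fix z assume z: "z \<in> upper_half"
  define D where "D = {d. d dvd n \<and> coprime (n div d) N}"
  define E where "E M = exp (2 * of_real pi * \<i> * of_nat M * z)" for M
  define co where "co d M = (if (n div d) dvd M then of_nat d * fourier_coeff f (d * (M div (n div d))) / of_nat d ^ \<kappa> else (0::complex))" for d M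
  have finD: "finite D" unfolding D_def using n by (auto intro: finite_subset[of _ "{..n}"] dest: dvd_imp_le)
  have inner: "(\<lambda>M. co d M * E M) sums (\<Sum>b<d. f ((of_nat (n div d) * z + of_nat b) / of_nat d) / of_nat d ^ \<kappa>)"
    if dD: "d \<in> D" for d
  proof -
    have d: "d > 0" and dn: "d dvd n" using dD n unfolding D_def by (auto intro: Nat.gr0I)
    define e where "e = n div d"
    have e: "e > 0" using dn n d unfolding e_def by (auto elim!: dvdE)
    have "(\<lambda>t. of_nat d * fourier_coeff f (d * t) * exp (2 * of_real pi * \<i> * of_nat t * (of_nat e * z)) / of_nat d ^ \<kappa>)
        sums ((\<Sum>b<d. f ((of_nat e * z + of_nat b) / of_nat d)) / of_nat d ^ \<kappa>)"
      by (rule sums_divide[OF hecke_inner[OF cf d e z]])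
    moreover have "(\<lambda>t. co d (e * t) * E (e * t)) = (\<lambda>t. of_nat d * fourier_coeff f (d * t) * exp (2 * of_real pi * \<i> * of_nat t * (of_nat e * z)) / of_nat d ^ \<kappa>)"
      using e unfolding co_def E_def e_def[symmetric] by (auto simp: ac_simps)
    ultimately have "(\<lambda>t. co d (e * t) * E (e * t)) sums ((\<Sum>b<d. f ((of_nat e * z + of_nat b) / of_nat d)) / of_nat d ^ \<kappa>)"
      by simp
    moreover have "strict_mono (\<lambda>t. e * t)" using e by (simp add: strict_mono_def)
    moreover have "co d M * E M = 0" if "M \<notin> range (\<lambda>t. e * t)" for M
      using that unfolding co_def e_def[symmetric] by (auto elim!: dvdE)
    ultimately have "(\<lambda>M. co d M * E M) sums ((\<Sum>b<d. f ((of_nat e * z + of_nat b) / of_nat d)) / of_nat d ^ \<kappa>)"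
      using sums_mono_reindex[of "\<lambda>t. e * t" "\<lambda>M. co d M * E M"] by blast
    then show ?thesis unfolding e_def by (simp add: sum_divide_distrib)
  qed
  have "(\<lambda>M. \<Sum>d\<in>D. co d M * E M) sums (\<Sum>d\<in>D. \<Sum>b<d. f ((of_nat (n div d) * z + of_nat b) / of_nat d) / of_nat d ^ \<kappa>)"
    by (rule sums_sum) (rule inner)
  then have "(\<lambda>M. of_real (real n powr (real \<kappa> - 1)) * (\<Sum>d\<in>D. co d M * E M)) sums hecke_op \<kappa> N n f z"
    unfolding hecke_op_def D_def by (rule sums_mult)
  moreover have "of_real (real n powr (real \<kappa> - 1)) * (\<Sum>d\<in>D. co d M * E M) = hcoef \<kappa> N n f M * E M" for M
    unfolding hcoef_def D_def[symmetric] co_def[symmetric] by (simp add: sum_distrib_right mult.assoc)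
  ultimately show "(\<lambda>M. hcoef \<kappa> N n f M * exp (2 * of_real pi * \<i> * of_nat M * z)) sums hecke_op \<kappa> N n f z"
    unfolding E_def by simp
qed



lemma powr_cancel_nat:
  assumes n: "n > 0"
  shows "of_real (real n powr (real \<kappa> - 1)) * (of_nat n * X / of_nat n ^ \<kappa>) = (X::complex)"
proof -
  have "real n powr (real \<kappa> - 1) = real n ^ \<kappa> / real n"
    using n by (simp add: powr_diff powr_realpow)
  then have "of_real (real n powr (real \<kappa> - 1)) = (of_nat n ^ \<kappa> / of_nat n :: complex)"
    by simp
  then show ?thesis using n by (simp add: field_simps)
qed

lemma hcoef_coprime:
  assumes n: "n > 0" and cop: "coprime n M"
  shows "hcoef \<kappa> N n f M = fourier_coeff f (n * M)"
proof -
  define D where "D = {d. d dvd n \<and> coprime (n div d) N}"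
  define g where "g d = (if (n div d) dvd M then of_nat d * fourier_coeff f (d * (M div (n div d))) / of_nat d ^ \<kappa> else (0::complex))" for d
  have finD: "finite D" unfolding D_def using n by (auto intro: finite_subset[of _ "{..n}"] dest: dvd_imp_le)
  have nD: "n \<in> D" unfolding D_def using n by simp
  have z: "g d = 0" if "d \<in> D - {n}" for d
  proof (rule ccontr)
    assume "g d \<noteq> 0"
    then have dM: "(n div d) dvd M" unfolding g_def by (auto split: if_splits)
    have dn: "d dvd n" and dne: "d \<noteq> n" using that unfolding D_def by auto
    have "d * (n div d) = n" using dn by simp
    then have "(n div d) dvd n" by (metis dvd_triv_right)
    then have "n div d = 1" using coprime_common_divisor_nat[OF cop _ dM] by simp
    then have "d = n" using dn n by (metis div_mult_self1_is_m dvd_div_mult_self mult.left_neutral)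
    then show False using dne by simp
  qed
  have "sum g D = g n + sum g (D - {n})" by (rule sum.remove[OF finD nD])
  also have "sum g (D - {n}) = 0" using z by simp
  finally have "sum g D = g n" by simp
  also have "g n = of_nat n * fourier_coeff f (n * M) / of_nat n ^ \<kappa>" using n by (simp add: g_def)
  finally have "sum g D = of_nat n * fourier_coeff f (n * M) / of_nat n ^ \<kappa>" .
  then show ?thesis unfolding hcoef_def D_def[symmetric] g_def[symmetric]
    using powr_cancel_nat[OF n] by simp
qed

lemma coeff_mult:
  assumes pf: "primitive_form \<kappa> N f" and n: "n > 0" and cop: "coprime n M"
  shows "fourier_coeff f (n * M) = fourier_coeff f n * fourier_coeff f M"
proof -
  have cf: "cusp_form \<kappa> N f" and he: "hecke_eigenform \<kappa> N f" and a1: "fourier_coeff f 1 = 1"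
    using pf by (auto simp: primitive_form_def)
  obtain \<mu> where mu: "\<forall>z\<in>upper_half. hecke_op \<kappa> N n f z = \<mu> * f z"
    using he n unfolding hecke_eigenform_def by blast
  have hq2: "has_q_expansion (hecke_op \<kappa> N n f) (\<lambda>M. \<mu> * fourier_coeff f M)"
    unfolding has_q_expansion_def
  proof
    fix z assume z: "z \<in> upper_half"
    have "(\<lambda>M. fourier_coeff f M * exp (2 * of_real pi * \<i> * of_nat M * z)) sums f z"
      using coeff_q[OF cf] z unfolding has_q_expansion_def by blast
    then have "(\<lambda>M. \<mu> * (fourier_coeff f M * exp (2 * of_real pi * \<i> * of_nat M * z))) sums (\<mu> * f z)"
      by (rule sums_mult)
    then show "(\<lambda>M. \<mu> * fourier_coeff f M * exp (2 * of_real pi * \<i> * of_nat M * z)) sums hecke_op \<kappa> N n f z"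
      using mu z by (simp add: mult.assoc)
  qed
  have eq: "hcoef \<kappa> N n f = (\<lambda>M. \<mu> * fourier_coeff f M)"
    by (rule q_unique[OF hecke_q[OF cf n] hq2])
  have "fourier_coeff f (n * 1) = \<mu> * fourier_coeff f 1"
    using hcoef_coprime[OF n, of 1 \<kappa> N f] eq by (metis coprime_1_right)
  then have "\<mu> = fourier_coeff f n" using a1 by simp
  moreover have "fourier_coeff f (n * M) = \<mu> * fourier_coeff f M"
    using hcoef_coprime[OF n cop, of \<kappa> N f] eq by metis
  ultimately show ?thesis by simp
qed



lemma two_dvd_fact:
  assumes "a \<noteq> b" "a \<in> {1..n}" "b \<in> {1..n}"
  shows "a * b dvd fact n"
proof -
  have "fact n = (\<Prod>{1..n} :: nat)" by (simp add: fact_prod)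
  also have "\<dots> = a * \<Prod>({1..n} - {a})" using assms by (simp add: prod.remove)
  also have "\<Prod>({1..n} - {a}) = b * \<Prod>({1..n} - {a} - {b})"
    by (rule prod.remove) (use assms in auto)
  finally show ?thesis by simp
qed

lemma coprime_mi:
  fixes \<nu> m mi K :: nat
  assumes "\<nu> > 0" "\<nu> \<le> K" "fact (2 * K) dvd m" "m + \<nu> = \<nu> * mi"
  shows "coprime \<nu> mi"
proof -
  have "\<nu> * (2 * \<nu>) dvd fact (2 * K)" using assms by (intro two_dvd_fact) auto
  moreover have "\<nu> * \<nu> dvd \<nu> * (2 * \<nu>)" by simp
  ultimately have "\<nu> * \<nu> dvd m" using assms(3) by (meson dvd_trans)
  then obtain t where t: "m = \<nu> * \<nu> * t" by blast
  then have "\<nu> * mi = \<nu> * (\<nu> * t + 1)" using assms(4) by (simp add: algebra_simps)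
  then have "mi = \<nu> * t + 1" using assms(1) mult_left_cancel by blast
  show ?thesis
  proof (rule coprimeI)
    fix c assume c1: "c dvd \<nu>" and c2: "c dvd mi"
    have "c dvd \<nu> * t" using c1 by simp
    moreover have "c dvd \<nu> * t + 1" using c2 \<open>mi = \<nu> * t + 1\<close> by simp
    ultimately have "c dvd 1" using dvd_add_right_iff by blast
    then show "is_unit c" by simp
  qed
qed

lemma ratio_bounds:
  fixes m \<nu> :: nat and e :: real
  assumes "m > 0"
  shows "1 / ((1 + real \<nu>) powr \<bar>e\<bar>) \<le> (real (m + \<nu>) / real m) powr e"
    and "(real (m + \<nu>) / real m) powr e \<le> (1 + real \<nu>) powr \<bar>e\<bar>"
proof -
  define q where "q = real (m + \<nu>) / real m"
  have q1: "1 \<le> q" using assms by (simp add: q_def)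
  have "q = 1 + real \<nu> / real m" using assms by (simp add: q_def field_simps)
  moreover have "real \<nu> / real m \<le> real \<nu>" using assms
    by (simp add: divide_le_eq_1 mult_le_cancel_left1 divide_le_eq)
  ultimately have q2: "q \<le> 1 + real \<nu>" by simp
  have up: "q powr \<bar>e\<bar> \<le> (1 + real \<nu>) powr \<bar>e\<bar>" using q1 q2 by (intro powr_mono2) auto
  have "q powr e \<le> q powr \<bar>e\<bar>" using q1 by (intro powr_mono) auto
  with up have "q powr e \<le> (1 + real \<nu>) powr \<bar>e\<bar>" by linarith
  then show "(real (m + \<nu>) / real m) powr e \<le> (1 + real \<nu>) powr \<bar>e\<bar>" unfolding q_def .
  have "q powr (- \<bar>e\<bar>) \<le> q powr e" using q1 by (intro powr_mono) auto
  moreover have "q powr (- \<bar>e\<bar>) = 1 / q powr \<bar>e\<bar>" using q1 by (simp add: powr_minus_divide)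
  moreover have "1 / ((1 + real \<nu>) powr \<bar>e\<bar>) \<le> 1 / q powr \<bar>e\<bar>"
    using up q1 by (intro divide_left_mono) auto
  ultimately show "1 / ((1 + real \<nu>) powr \<bar>e\<bar>) \<le> (real (m + \<nu>) / real m) powr e"
    unfolding q_def by linarith
qed

lemma final_ineq:
  fixes c0 L B X r :: real
  assumes "c0 > 0" "L > 0" "B \<ge> 1" "c0 \<le> L / B" "c0 \<le> 1 / (L * B)" "X \<ge> 0" "1 / B \<le> r" "r \<le> B"
  shows "c0 * X \<le> L * X" "L * X \<le> X / c0" "c0 * X \<le> L * X * r" "L * X * r \<le> X / c0"
proof -
  have B0: "B > 0" using assms by simp
  have "L / B \<le> L" using assms B0 by (simp add: divide_le_eq mult_le_cancel_left1)
  then have c1: "c0 \<le> L" using assms by linarith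
  have "c0 * (L * B) \<le> 1" using assms B0 by (simp add: le_divide_eq)
  moreover have "c0 * L \<le> c0 * (L * B)" using assms by (simp add: mult_le_cancel_left1)
  ultimately have "c0 * L \<le> 1" by linarith
  then have c2: "L \<le> 1 / c0" using assms by (simp add: le_divide_eq mult.commute)
  have "L / B \<le> L * r" using assms B0 by (metis divide_inverse mult_left_mono less_imp_le inverse_eq_divide)
  then have c3: "c0 \<le> L * r" using assms by linarith
  have "L * r \<le> L * B" using assms by simp
  moreover have "L * B \<le> 1 / c0" using assms B0 by (simp add: le_divide_eq mult.commute)
  ultimately have c4: "L * r \<le> 1 / c0" by linarith
  show "c0 * X \<le> L * X" using c1 assms by (simp add: mult_right_mono)
  show "L * X \<le> X / c0" using mult_right_mono[OF c2 assms(6)] by simp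
  show "c0 * X \<le> L * X * r" using mult_right_mono[OF c3 assms(6)] by (simp add: ac_simps)
  show "L * X * r \<le> X / c0" using mult_right_mono[OF c4 assms(6)] by (simp add: ac_simps)
qed



lemma lambda_mult:
  assumes "a > 0" "b > 0" "fourier_coeff f (a * b) = fourier_coeff f a * fourier_coeff f b"
  shows "lambda_f f \<kappa> (a * b) = lambda_f f \<kappa> a * lambda_f f \<kappa> b"
proof -
  have "real (a * b) powr ((real \<kappa> - 1) / 2) = real a powr ((real \<kappa> - 1) / 2) * real b powr ((real \<kappa> - 1) / 2)"
    by (simp add: powr_mult)
  then show ?thesis unfolding lambda_f_def assms(3) by (simp add: field_simps)
qed

theorem proposition5p1:
  fixes k :: nat and f :: "nat \<Rightarrow> complex \<Rightarrow> complex"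
    and \<kappa> N \<nu> :: "nat \<Rightarrow> nat"
  assumes "k \<ge> 2"
    and "\<And>i. i \<in> {1..k} \<Longrightarrow> primitive_form (\<kappa> i) (N i) (f i)"
    and "\<And>i. i \<in> {1..k} \<Longrightarrow> squarefree (N i)"
    and "inj_on \<nu> {1..k}"
    and "\<And>i. i \<in> {1..k} \<Longrightarrow> \<nu> i > 0"
    and "\<And>i. i \<in> {1..k} \<Longrightarrow> fourier_coeff (f i) (\<nu> i) \<noteq> 0"
  defines "K \<equiv> Max (\<nu> ` {1..k})"
  shows "\<exists>c0::real. c0 > 0 \<and>
    (\<forall>m::nat. m > 0 \<and> fact (2 * K) dvd m \<longrightarrow>
      (\<forall>i\<in>{1..k}. \<forall>mi::nat. m + \<nu> i = \<nu> i * mi \<longrightarrow>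
         c0 * cmod (lambda_f (f i) (\<kappa> i) mi) \<le> cmod (lambda_f (f i) (\<kappa> i) (m + \<nu> i)) \<and>
         cmod (lambda_f (f i) (\<kappa> i) (m + \<nu> i)) \<le> cmod (lambda_f (f i) (\<kappa> i) mi) / c0 \<and>
         c0 * cmod (lambda_f (f i) (\<kappa> i) mi)
           \<le> cmod (fourier_coeff (f i) (m + \<nu> i)) / real m powr ((real (\<kappa> i) - 1) / 2) \<and>
         cmod (fourier_coeff (f i) (m + \<nu> i)) / real m powr ((real (\<kappa> i) - 1) / 2)
           \<le> cmod (lambda_f (f i) (\<kappa> i) mi) / c0))"
proof -
  define L where "L i = cmod (lambda_f (f i) (\<kappa> i) (\<nu> i))" for i
  define B where "B i = (1 + real (\<nu> i)) powr \<bar>(real (\<kappa> i) - 1) / 2\<bar>" for i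
  define c0 where "c0 = Min ((\<lambda>i. min (L i / B i) (1 / (L i * B i))) ` {1..k})"
  have Lpos: "L i > 0" if "i \<in> {1..k}" for i
    using assms(5,6)[OF that] unfolding L_def lambda_f_def by simp
  have Bge: "B i \<ge> 1" for i unfolding B_def by (rule ge_one_powr_ge_zero) auto
  have ne: "{1..k} \<noteq> {}" using assms(1) by auto
  have Bpos: "B i > 0" for i using Bge[of i] by linarith
  have k1: "Suc 0 \<le> k" using assms(1) by simp
  have c0pos: "c0 > 0" unfolding c0_def
    using Lpos Bpos k1 by (subst Min_gr_iff) (auto simp: ne intro!: divide_pos_pos mult_pos_pos)
  have c0le: "c0 \<le> L i / B i \<and> c0 \<le> 1 / (L i * B i)" if "i \<in> {1..k}" for i
  proof -
    have "c0 \<le> min (L i / B i) (1 / (L i * B i))" unfolding c0_def using that by (intro Min_le) auto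
    then show ?thesis by simp
  qed
  show ?thesis
  proof (rule exI[of _ c0], intro conjI allI impI ballI c0pos)
    fix m i mi
    assume mH: "0 < m \<and> fact (2 * K) dvd m" and i: "i \<in> {1..k}" and eq: "m + \<nu> i = \<nu> i * mi"
    let ?e = "(real (\<kappa> i) - 1) / 2"
    let ?X = "cmod (lambda_f (f i) (\<kappa> i) mi)"
    let ?r = "(real (m + \<nu> i) / real m) powr ?e"
    have nu: "\<nu> i > 0" using assms(5)[OF i] .
    have nuK: "\<nu> i \<le> K" unfolding K_def using i by (intro Max_ge) auto
    have cop: "coprime (\<nu> i) mi" using coprime_mi[OF nu nuK _ eq] mH by blast
    have mi0: "mi > 0" using eq mH by (metis add_gr_0 mult_0_right neq0_conv)
    have cm: "fourier_coeff (f i) (\<nu> i * mi) = fourier_coeff (f i) (\<nu> i) * fourier_coeff (f i) mi"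
      by (rule coeff_mult[OF assms(2)[OF i] nu cop])
    have lam: "cmod (lambda_f (f i) (\<kappa> i) (m + \<nu> i)) = L i * ?X"
      unfolding eq L_def lambda_mult[OF nu mi0 cm] by (simp add: norm_mult)
    have a_rel: "cmod (fourier_coeff (f i) (m + \<nu> i)) / real m powr ?e = L i * ?X * ?r"
    proof -
      have "cmod (lambda_f (f i) (\<kappa> i) (m + \<nu> i)) = cmod (fourier_coeff (f i) (m + \<nu> i)) / real (m + \<nu> i) powr ?e"
        unfolding lambda_f_def by (simp add: norm_divide)
      moreover have "?r = real (m + \<nu> i) powr ?e / real m powr ?e" by (simp add: powr_divide)
      ultimately show ?thesis using lam by (simp add: field_simps)
    qed
    have rb: "1 / B i \<le> ?r" "?r \<le> B i"
      unfolding B_def using ratio_bounds[of m "\<nu> i" ?e] mH by auto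
    note fi = final_ineq[OF c0pos Lpos[OF i] Bge conjunct1[OF c0le[OF i]] conjunct2[OF c0le[OF i]] norm_ge_zero rb]
    show "c0 * ?X \<le> cmod (lambda_f (f i) (\<kappa> i) (m + \<nu> i))" using fi lam by simp
    show "cmod (lambda_f (f i) (\<kappa> i) (m + \<nu> i)) \<le> ?X / c0" using fi lam by simp
    show "c0 * ?X \<le> cmod (fourier_coeff (f i) (m + \<nu> i)) / real m powr ?e" using fi a_rel by simp
    show "cmod (fourier_coeff (f i) (m + \<nu> i)) / real m powr ?e \<le> ?X / c0" using fi a_rel by simp
  qed
qed


end
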